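(* Let $d \ge 1$, $\rho \ge 0$, and let $r^{(1)}, \dots, r^{(\rho)} \in (0,1)^d$ be pairwise incomparable points such that for each $j \in [d]$ the values $r^{(i)}_j$, $i \in [\rho]$, are distinct. Then the number $\gamma$ of generators of their record-setting region satisfies $$\gamma \le \binom{\rho + d - 1}{d-1}.$$
   Context: For $x,y \in \mathbb{R}^d$, $x \prec y$ means $x_j < y_j$ for all $j \in [d]$, and $x \le y$ means $x_j \le y_j$ for all $j$. The record-setting region of points $r^{(1)},\dots,r^{(\rho)}$ is $S := \{x \in [0,1)^d : x \not\prec r^{(i)} \text{ for all } i \in [\rho]\}$, and its generators are the minimal elements of $S$ with respect to $\le$. *)

theory Defs
  imports "HOL-Analysis.Analysis"
begin

text \<open>Points of R^d are vectors real^'n with d = CARD('n).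
  The record points are r 0, ..., r (rho - 1).\<close>

definition strict_dom :: "real^'n \<Rightarrow> real^'n \<Rightarrow> bool" where
  "strict_dom x y \<longleftrightarrow> (\<forall>j. x $ j < y $ j)"

definition weak_dom :: "real^'n \<Rightarrow> real^'n \<Rightarrow> bool" where
  "weak_dom x y \<longleftrightarrow> (\<forall>j. x $ j \<le> y $ j)"

definition record_region :: "(nat \<Rightarrow> real^'n) \<Rightarrow> nat \<Rightarrow> (real^'n) set" where
  "record_region r rho =
     {x. (\<forall>j. 0 \<le> x $ j \<and> x $ j < 1) \<and> (\<forall>i<rho. \<not> strict_dom x (r i))}"

definition generators :: "(nat \<Rightarrow> real^'n) \<Rightarrow> nat \<Rightarrow> (real^'n) set" where
  "generators r rho =
     {x \<in> record_region r rho.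
        \<forall>y \<in> record_region r rho. weak_dom y x \<longrightarrow> y = x}"

end

theory Submission
  imports Defs
begin

definition reg :: "'a set \<Rightarrow> ('a \<Rightarrow> real) set \<Rightarrow> ('a \<Rightarrow> real) set" where
  "reg J P = {x. (\<forall>j\<in>J. 0 \<le> x j \<and> x j < 1) \<and> (\<forall>j. j \<notin> J \<longrightarrow> x j = 0)
                  \<and> (\<forall>p\<in>P. \<not> (\<forall>j\<in>J. x j < p j))}"

definition gen :: "'a set \<Rightarrow> ('a \<Rightarrow> real) set \<Rightarrow> ('a \<Rightarrow> real) set" where
  "gen J P = {x \<in> reg J P. \<forall>y\<in>reg J P. (\<forall>j. y j \<le> x j) \<longrightarrow> y = x}"

lemma hockey: "(\<Sum>t\<le>n. (t + m) choose m) = (n + m + 1) choose (m + 1)"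
  by (induction n) auto

lemma gen_single:
  "finite (gen {a} P) \<and> card (gen {a} P) \<le> 1"
proof -
  have eq: "x = y" if x: "x \<in> gen {a} P" and y: "y \<in> gen {a} P" for x y
  proof (cases "x a \<le> y a")
    case True
    have "\<forall>j. x j \<le> y j"
    proof
      fix j show "x j \<le> y j"
        using True x y by (cases "j = a") (auto simp: gen_def reg_def)
    qed
    then show ?thesis using x y by (auto simp: gen_def)
  next
    case False
    have "\<forall>j. y j \<le> x j"
    proof
      fix j show "y j \<le> x j"
        using False x y by (cases "j = a") (auto simp: gen_def reg_def)
    qed
    then show ?thesis using x y by (auto simp: gen_def)
  qed
  show ?thesis
  proof (cases "gen {a} P = {}")
    case True then show ?thesis by simp
  next
    case False
    then obtain x where "x \<in> gen {a} P" by auto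
    then have "gen {a} P \<subseteq> {x}" using eq by auto
    then show ?thesis using card_mono[of "{x}" "gen {a} P"] finite_subset by fastforce
  qed
qed

lemma gen_value:
  assumes x: "x \<in> gen J P" and a: "a \<in> J" and fin: "finite P"
  shows "x a = 0 \<or> (\<exists>p\<in>P. x a = p a)"
proof (rule ccontr)
  assume H: "\<not> (x a = 0 \<or> (\<exists>p\<in>P. x a = p a))"
  have xr: "x \<in> reg J P" using x by (simp add: gen_def)
  then have xa: "0 < x a" "x a < 1" using H a by (auto simp: reg_def)
  define U where "U = insert 0 {p a | p. p \<in> P \<and> p a < x a}"
  have finU: "finite U" unfolding U_def using fin by auto
  define u where "u = Max U"
  have uU: "u \<in> U" unfolding u_def using finU U_def by (intro Max_in) auto
  have u0: "0 \<le> u" unfolding u_def using finU U_def by (intro Max_ge) auto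
  have ux: "u < x a" using uU xa unfolding U_def by auto
  have ge: "p a \<le> u" if "p \<in> P" "p a < x a" for p
    unfolding u_def using finU U_def that by (intro Max_ge) auto
  define w where "w = x(a := u)"
  have wr: "w \<in> reg J P"
    unfolding reg_def
  proof (intro CollectI conjI ballI allI impI)
    fix j assume "j \<in> J" then show "0 \<le> w j" "w j < 1"
      using xr u0 ux xa unfolding w_def reg_def by auto
  next
    fix j assume "j \<notin> J" then show "w j = 0" using xr a unfolding w_def reg_def by auto
  next
    fix p assume p: "p \<in> P"
    show "\<not> (\<forall>j\<in>J. w j < p j)"
    proof (cases "p a < x a")
      case True
      then have "w a \<ge> p a" using ge p unfolding w_def by auto
      then show ?thesis using a by force
    next
      case False
      then have "p a > x a" using H p by force
      from xr p obtain j where j: "j \<in> J" "x j \<ge> p j" unfolding reg_def by force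
      then have "j \<noteq> a" using \<open>p a > x a\<close> by auto
      then show ?thesis using j unfolding w_def by force
    qed
  qed
  have "\<forall>j. w j \<le> x j" unfolding w_def using ux by auto
  then have "w = x" using x wr by (auto simp: gen_def)
  then show False using ux unfolding w_def by (metis fun_upd_same less_irrefl)
qed

lemma gen_restrict:
  assumes x: "x \<in> gen (insert a J) P" and aJ: "a \<notin> J"
  shows "x(a := 0) \<in> gen J {p \<in> P. p a > x a}"
proof -
  have xr: "x \<in> reg (insert a J) P" using x by (simp add: gen_def)
  have x'r: "x(a := 0) \<in> reg J {p \<in> P. p a > x a}"
    unfolding reg_def
  proof (intro CollectI conjI ballI allI impI)
    fix j assume "j \<in> J" then show "0 \<le> (x(a:=0)) j" "(x(a:=0)) j < 1"
      using xr unfolding reg_def by auto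
  next
    fix j assume "j \<notin> J" then show "(x(a:=0)) j = 0" using xr unfolding reg_def by auto
  next
    fix p assume p: "p \<in> {p \<in> P. p a > x a}"
    have pP: "p \<in> P" and pa: "p a > x a" using p by auto
    have "\<not> (\<forall>j\<in>insert a J. x j < p j)" using xr pP unfolding reg_def by blast
    then obtain j where j: "j \<in> insert a J" "x j \<ge> p j" by (auto simp: not_less)
    then have ja: "j \<noteq> a" using pa by auto
    then have jJ: "j \<in> J" using j by simp
    have "(x(a:=0)) j \<ge> p j" using ja j by simp
    then show "\<not> (\<forall>j\<in>J. (x(a:=0)) j < p j)" using jJ by (meson not_less)
  qed
  moreover have "y = x(a := 0)" if y: "y \<in> reg J {p \<in> P. p a > x a}" and le: "\<forall>j. y j \<le> (x(a:=0)) j" for y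
  proof -
    define z where "z = y(a := x a)"
    have zr: "z \<in> reg (insert a J) P"
      unfolding reg_def
    proof (intro CollectI conjI ballI allI impI)
      fix j assume "j \<in> insert a J" then show "0 \<le> z j" "z j < 1"
        using xr y unfolding z_def reg_def by auto
    next
      fix j assume "j \<notin> insert a J" then show "z j = 0" using y unfolding z_def reg_def by auto
    next
      fix p assume p: "p \<in> P"
      show "\<not> (\<forall>j\<in>insert a J. z j < p j)"
      proof (cases "p a > x a")
        case True
        then have "p \<in> {p \<in> P. p a > x a}" using p by simp
        then have "\<not> (\<forall>j\<in>J. y j < p j)" using y unfolding reg_def by blast
        then obtain j where j: "j \<in> J" "y j \<ge> p j" by (auto simp: not_less)
        then have "j \<noteq> a" using aJ by auto
        then have "z j \<ge> p j" using j unfolding z_def by simp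
        then show ?thesis using j by (auto simp: not_less)
      next
        case False then have "z a \<ge> p a" unfolding z_def by simp
        then show ?thesis by (auto simp: not_less)
      qed
    qed
    have "\<forall>j. z j \<le> x j"
    proof
      fix j show "z j \<le> x j" using le[rule_format, of j] unfolding z_def by (cases "j = a") simp_all
    qed
    then have zx: "z = x" using x zr unfolding gen_def by blast
    have ya: "y a = 0" using y aJ unfolding reg_def by auto
    show ?thesis
    proof (rule ext)
      fix j show "y j = (x(a := 0)) j"
      proof (cases "j = a")
        case True then show ?thesis using ya by simp
      next
        case False then have "z j = y j" unfolding z_def by simp
        then show ?thesis using zx False by simp
      qed
    qed
  qed
  ultimately show ?thesis unfolding gen_def mem_Collect_eq by blast
qed

lemma main_bound:
  assumes "finite J" "J \<noteq> {}"
  shows "\<forall>P. finite P \<longrightarrow> finite (gen J P) \<and> card (gen J P) \<le> (card P + card J - 1) choose (card J - 1)"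
  using assms
proof (induction J rule: finite_ne_induct)
  case (singleton a)
  show ?case
  proof (intro allI impI)
    fix P :: "('a \<Rightarrow> real) set"
    show "finite (gen {a} P) \<and> card (gen {a} P) \<le> (card P + card {a} - 1) choose (card {a} - 1)"
      using gen_single[of a P] by simp
  qed
next
  case (insert a J)
  show ?case
  proof (intro allI impI)
    fix P :: "('a \<Rightarrow> real) set" assume finP: "finite P"
    define k where "k = card J"
    have k1: "k \<ge> 1" using insert k_def by (simp add: Suc_leI card_gt_0_iff)
    define Pv where "Pv v = {p \<in> P. p a > v}" for v
    define V where "V = {v \<in> insert 0 ((\<lambda>p. p a) ` P). v \<ge> 0}"
    have finV: "finite V" unfolding V_def using finP by auto
    have finPv: "finite (Pv v)" for v unfolding Pv_def using finP by auto
    have IH: "finite (gen J (Pv v)) \<and> card (gen J (Pv v)) \<le> (card (Pv v) + k - 1) choose (k - 1)" for v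
      using insert.IH finPv k_def by blast
    define F where "F x = (x a, x(a := 0))" for x :: "'a \<Rightarrow> real"
    have injF: "inj_on F (gen (insert a J) P)"
      unfolding F_def by (rule inj_onI) (metis fun_upd_triv fun_upd_upd prod.inject)
    have sub: "F ` gen (insert a J) P \<subseteq> Sigma V (\<lambda>v. gen J (Pv v))"
    proof
      fix y assume "y \<in> F ` gen (insert a J) P"
      then obtain x where x: "x \<in> gen (insert a J) P" "y = F x" by auto
      have v1: "x a = 0 \<or> (\<exists>p\<in>P. x a = p a)" using gen_value[OF x(1) insertI1 finP] .
      have v2: "x a \<ge> 0" using x(1) unfolding gen_def reg_def by auto
      have "x a \<in> V" using v1 v2 unfolding V_def by auto
      moreover have "x(a:=0) \<in> gen J (Pv (x a))"
        using gen_restrict[OF x(1) insert.hyps(3)] unfolding Pv_def .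
      ultimately show "y \<in> Sigma V (\<lambda>v. gen J (Pv v))" using x unfolding F_def by auto
    qed
    have finS: "finite (Sigma V (\<lambda>v. gen J (Pv v)))" using finV IH by auto
    have fin: "finite (gen (insert a J) P)"
      using finite_imageD[OF finite_subset[OF sub finS] injF] .
    have "card (gen (insert a J) P) = card (F ` gen (insert a J) P)"
      using card_image[OF injF] by simp
    also have "\<dots> \<le> card (Sigma V (\<lambda>v. gen J (Pv v)))" using card_mono[OF finS sub] .
    also have "\<dots> = (\<Sum>v\<in>V. card (gen J (Pv v)))" using finV IH by simp
    also have "\<dots> \<le> (\<Sum>v\<in>V. (card (Pv v) + k - 1) choose (k - 1))"
      using IH by (intro sum_mono) auto
    also have "\<dots> = (\<Sum>v\<in>V. (card P - (card P - card (Pv v)) + k - 1) choose (k - 1))"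
    proof (intro sum.cong refl)
      fix v have "card (Pv v) \<le> card P" unfolding Pv_def using finP by (intro card_mono) auto
      then show "(card (Pv v) + k - 1) choose (k - 1) = (card P - (card P - card (Pv v)) + k - 1) choose (k - 1)"
        by simp
    qed
    also have "\<dots> = (\<Sum>t\<in>(\<lambda>v. card P - card (Pv v)) ` V. (card P - t + k - 1) choose (k - 1))"
    proof -
      have "inj_on (\<lambda>v. card P - card (Pv v)) V"
      proof (rule inj_onI, rule ccontr)
        fix v w assume vV: "v \<in> V" and wV: "w \<in> V"
          and eq: "card P - card (Pv v) = card P - card (Pv w)" and ne: "v \<noteq> w"
        have key: "card (Pv w) < card (Pv v)" if kv: "v \<in> V" "w \<in> V" "v < w" for v w
        proof -
          have "w \<noteq> 0" using kv unfolding V_def by auto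
          then obtain p where p: "p \<in> P" "w = p a" using kv(2) unfolding V_def by auto
          have "Pv w \<subset> Pv v" unfolding Pv_def using p kv by auto
          then show ?thesis using finPv psubset_card_mono by blast
        qed
        have "card (Pv v) \<le> card P" "card (Pv w) \<le> card P"
          unfolding Pv_def using finP by (auto intro: card_mono)
        then have "card (Pv v) = card (Pv w)" using eq by simp
        then show False using key[OF vV wV] key[OF wV vV] ne by fastforce
      qed
      then show ?thesis by (simp add: sum.reindex)
    qed
    also have "\<dots> \<le> (\<Sum>t\<le>card P. (card P - t + k - 1) choose (k - 1))"
      by (intro sum_mono2) auto
    also have "\<dots> = (\<Sum>t\<le>card P. (t + (k - 1)) choose (k - 1))"
    proof -
      have "(\<Sum>t\<le>card P. (card P - t + k - 1) choose (k - 1)) = (\<Sum>t\<le>card P. (card P - t + (k - 1)) choose (k - 1))"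
        using k1 by (intro sum.cong refl) simp
      also have "\<dots> = (\<Sum>t\<le>card P. (t + (k - 1)) choose (k - 1))"
        using sum.atLeastAtMost_rev[of "\<lambda>t. (t + (k - 1)) choose (k - 1)" 0 "card P"]
        by (simp add: atLeast0AtMost)
      finally show ?thesis .
    qed
    also have "\<dots> = (card P + card (insert a J) - 1) choose (card (insert a J) - 1)"
    proof -
      have ci: "card (insert a J) = k + 1" using insert k_def by simp
      have "(\<Sum>t\<le>card P. (t + (k - 1)) choose (k - 1)) = (card P + (k - 1) + 1) choose (k - 1 + 1)"
        by (rule hockey)
      also have "\<dots> = (card P + card (insert a J) - 1) choose (card (insert a J) - 1)"
        using ci k1 by simp
      finally show ?thesis .
    qed
    finally show "finite (gen (insert a J) P) \<and>
        card (gen (insert a J) P) \<le> (card P + card (insert a J) - 1) choose (card (insert a J) - 1)"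
      using fin by simp
  qed
qed

theorem theoremT:
  fixes r :: "nat \<Rightarrow> real^'n" and rho :: nat
  assumes "\<forall>i<rho. \<forall>j. 0 < r i $ j \<and> r i $ j < 1"
    and "\<forall>i<rho. \<forall>k<rho. i \<noteq> k \<longrightarrow> \<not> weak_dom (r i) (r k)"
    and "\<forall>j. inj_on (\<lambda>i. r i $ j) {..<rho}"
  shows "finite (generators r rho) \<and>
         card (generators r rho) \<le> (rho + CARD('n) - 1) choose (CARD('n) - 1)"
proof -
  define P where "P = (\<lambda>i. vec_nth (r i)) ` {..<rho}"
  have finP: "finite P" unfolding P_def by auto
  have cardP: "card P \<le> rho" unfolding P_def using card_image_le[of "{..<rho}"] by simp
  have regeq: "vec_nth x \<in> reg UNIV P \<longleftrightarrow> x \<in> record_region r rho" for x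
    unfolding reg_def record_region_def P_def strict_dom_def by auto
  have geneq: "vec_nth x \<in> gen UNIV P \<longleftrightarrow> x \<in> generators r rho" for x
  proof
    assume h: "vec_nth x \<in> gen UNIV P"
    show "x \<in> generators r rho"
      unfolding generators_def
    proof (intro CollectI conjI ballI impI)
      show "x \<in> record_region r rho" using h regeq by (simp add: gen_def)
      fix y assume "y \<in> record_region r rho" "weak_dom y x"
      then have "vec_nth y \<in> reg UNIV P" "\<forall>j. y $ j \<le> x $ j" using regeq weak_dom_def by auto
      then have "vec_nth y = vec_nth x" using h by (auto simp: gen_def)
      then show "y = x" by (simp add: vec_eq_iff)
    qed
  next
    assume h: "x \<in> generators r rho"
    show "vec_nth x \<in> gen UNIV P"
      unfolding gen_def
    proof (intro CollectI conjI ballI impI)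
      show "vec_nth x \<in> reg UNIV P" using h regeq by (simp add: generators_def)
      fix y assume y: "y \<in> reg UNIV P" "\<forall>j. y j \<le> vec_nth x j"
      have "vec_nth (vec_lambda y) = y" by (rule ext) simp
      then have "vec_lambda y \<in> record_region r rho" using y regeq by metis
      moreover have "weak_dom (vec_lambda y) x" using y by (simp add: weak_dom_def)
      ultimately have "vec_lambda y = x" using h by (auto simp: generators_def)
      then show "y = vec_nth x" by auto
    qed
  qed
  have imeq: "vec_nth ` generators r rho = gen UNIV P"
  proof
    show "vec_nth ` generators r rho \<subseteq> gen UNIV P" using geneq by auto
    show "gen UNIV P \<subseteq> vec_nth ` generators r rho"
    proof
      fix y assume "y \<in> gen UNIV P"
      moreover have "vec_nth (vec_lambda y) = y" by (rule ext) simp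
      ultimately have "vec_lambda y \<in> generators r rho" using geneq[of "vec_lambda y"] by simp
      then show "y \<in> vec_nth ` generators r rho" by (metis image_eqI vec_lambda_inverse UNIV_I)
    qed
  qed
  have inj: "inj_on vec_nth (generators r rho)" by (rule inj_onI) (simp add: vec_eq_iff)
  have mb: "finite (gen (UNIV::'n set) P) \<and> card (gen (UNIV::'n set) P) \<le> (card P + CARD('n) - 1) choose (CARD('n) - 1)"
    using main_bound[of "UNIV :: 'n set"] finP by simp
  have fin: "finite (generators r rho)"
    using mb imeq finite_imageD[OF _ inj] by metis
  have "card (generators r rho) = card (gen (UNIV::'n set) P)"
    using card_image[OF inj] imeq by simp
  also have "\<dots> \<le> (card P + CARD('n) - 1) choose (CARD('n) - 1)" using mb by simp
  also have "\<dots> \<le> (rho + CARD('n) - 1) choose (CARD('n) - 1)"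
    using cardP by (intro binomial_right_mono) simp
  finally show ?thesis using fin by simp
qed

end
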